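(* Let $k$ be a field, $n\ge2$, $d>2$, and let $B\subseteq\mathbb{N}^n$ be the semigroup generated by a set $U$ with $\{\mathbf{m}\in T_{n,d}:\max(\mathbf{m})\ge d-1\}\subseteq U\subsetneq T_{n,d}$. Then $\dim k[B]=n$ and $\operatorname{depth}k[B]=1$ (at its homogeneous maximal ideal); in particular $k[B]$ is not Cohen–Macaulay.
   Context: $T_{n,d}=\{\mathbf{a}\in\mathbb{N}^n:\sum a_i=d\}$, $\max(\mathbf{a})=\max_i a_i$. For a semigroup $B\subseteq\mathbb{N}^n$, $k[B]\subseteq k[x_1,\dots,x_n]$ is the $k$-span of the monomials $x_1^{b_1}\cdots x_n^{b_n}$, $\mathbf{b}\in B$; equivalently $k[B]$ is the $k$-subalgebra generated by the monomials with exponent vectors in $U$. *)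

theory Defs
  imports "HOL-Library.Poly_Mapping" "HOL-Library.Extended_Nat" "HOL-Algebra.Ideal"
begin

text \<open>Exponent vectors in N^n are represented as finitely supported maps
  nat \<Rightarrow>0 nat whose keys lie in {..<n}; polynomials in x_0..x_{n-1} over k are
  elements of (nat \<Rightarrow>0 nat) \<Rightarrow>0 'k (monomial exponent \<mapsto> coefficient).\<close>

definition Nvec :: "nat \<Rightarrow> (nat \<Rightarrow>\<^sub>0 nat) set" where
  "Nvec n = {a. Poly_Mapping.keys a \<subseteq> {..<n}}"

definition T :: "nat \<Rightarrow> nat \<Rightarrow> (nat \<Rightarrow>\<^sub>0 nat) set" where
  "T n d = {a \<in> Nvec n. (\<Sum>i<n. Poly_Mapping.lookup a i) = d}"

definition maxv :: "nat \<Rightarrow> (nat \<Rightarrow>\<^sub>0 nat) \<Rightarrow> nat" where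
  "maxv n a = Max ((Poly_Mapping.lookup a) ` {..<n})"

inductive_set gen_semigroup :: "(nat \<Rightarrow>\<^sub>0 nat) set \<Rightarrow> (nat \<Rightarrow>\<^sub>0 nat) set"
  for U where
  zero: "0 \<in> gen_semigroup U"
| add: "u \<in> U \<Longrightarrow> b \<in> gen_semigroup U \<Longrightarrow> u + b \<in> gen_semigroup U"

definition semigroup_ring_carrier :: "(nat \<Rightarrow>\<^sub>0 nat) set \<Rightarrow> ((nat \<Rightarrow>\<^sub>0 nat) \<Rightarrow>\<^sub>0 'k::field) set" where
  "semigroup_ring_carrier B = {p. Poly_Mapping.keys p \<subseteq> B}"

definition semigroup_ring :: "(nat \<Rightarrow>\<^sub>0 nat) set \<Rightarrow> ((nat \<Rightarrow>\<^sub>0 nat) \<Rightarrow>\<^sub>0 'k::field) ring" where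
  "semigroup_ring B = \<lparr>carrier = semigroup_ring_carrier B, monoid.mult = (*), one = 1,
      zero = 0, add = (+)\<rparr>"

definition homog_max_ideal :: "(nat \<Rightarrow>\<^sub>0 nat) set \<Rightarrow> ((nat \<Rightarrow>\<^sub>0 nat) \<Rightarrow>\<^sub>0 'k::field) set" where
  "homog_max_ideal B = {p \<in> semigroup_ring_carrier B. Poly_Mapping.lookup p 0 = 0}"

definition krull_dim :: "('a, 'b) ring_scheme \<Rightarrow> enat" where
  "krull_dim R = Sup {enat (length Ps - 1) | Ps. Ps \<noteq> [] \<and>
      (\<forall>P \<in> set Ps. primeideal P R) \<and> sorted_wrt (\<subset>) Ps}"

definition regular_seq :: "('a, 'b) ring_scheme \<Rightarrow> 'a set \<Rightarrow> 'a list \<Rightarrow> bool" where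
  "regular_seq R M xs \<longleftrightarrow> set xs \<subseteq> M \<and>
     (\<forall>i < length xs. \<forall>y \<in> carrier R.
        xs ! i \<otimes>\<^bsub>R\<^esub> y \<in> Idl\<^bsub>R\<^esub> (set (take i xs)) \<longrightarrow> y \<in> Idl\<^bsub>R\<^esub> (set (take i xs))) \<and>
     Idl\<^bsub>R\<^esub> (set xs) \<noteq> carrier R"

definition depth :: "('a, 'b) ring_scheme \<Rightarrow> 'a set \<Rightarrow> enat" where
  "depth R M = Sup {enat (length xs) | xs. regular_seq R M xs}"

end

theory Submission
  imports Defs
begin

abbreviation ks where "ks \<equiv> Poly_Mapping.keys"
abbreviation lk where "lk \<equiv> Poly_Mapping.lookup"

type_synonym 'k pm = "(nat \<Rightarrow>\<^sub>0 nat) \<Rightarrow>\<^sub>0 'k"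

lemma gs_add: "a \<in> gen_semigroup U \<Longrightarrow> b \<in> gen_semigroup U \<Longrightarrow> a + b \<in> gen_semigroup U"
  by (induction a rule: gen_semigroup.induct) (auto simp: add.assoc intro: gen_semigroup.add)

lemma gs_U: "u \<in> U \<Longrightarrow> u \<in> gen_semigroup U"
  using gen_semigroup.add[of u U 0] gen_semigroup.zero by simp

lemma carr_iff: "p \<in> carrier (semigroup_ring B) \<longleftrightarrow> ks p \<subseteq> B"
  by (simp add: semigroup_ring_def semigroup_ring_carrier_def)

lemma sr_simps [simp]:
  "carrier (semigroup_ring B) = semigroup_ring_carrier B"
  "mult (semigroup_ring B) = (*)" "one (semigroup_ring B) = 1"
  "zero (semigroup_ring B) = 0" "add (semigroup_ring B) = (+)"
  by (simp_all add: semigroup_ring_def)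

locale smon =
  fixes B :: "(nat \<Rightarrow>\<^sub>0 nat) set"
  assumes B0: "0 \<in> B" and Badd: "a \<in> B \<Longrightarrow> b \<in> B \<Longrightarrow> a + b \<in> B"
begin

abbreviation R :: "'k::field pm ring" where "R \<equiv> semigroup_ring B"

lemma c_add: "ks p \<subseteq> B \<Longrightarrow> ks q \<subseteq> B \<Longrightarrow> ks (p + q) \<subseteq> B"
  using keys_add[of p q] by blast
lemma c_minus: "ks p \<subseteq> B \<Longrightarrow> ks (-p) \<subseteq> B" by simp
lemma c_diff: "ks p \<subseteq> B \<Longrightarrow> ks q \<subseteq> B \<Longrightarrow> ks (p - q) \<subseteq> B"
  using keys_diff[of p q] by blast
lemma c_mult: "ks p \<subseteq> B \<Longrightarrow> ks q \<subseteq> B \<Longrightarrow> ks (p * q) \<subseteq> B"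
proof
  fix x assume "x \<in> ks (p * q)" "ks p \<subseteq> B" "ks q \<subseteq> B"
  then obtain a b where "x = a + b" "a \<in> ks p" "b \<in> ks q" using keys_mult[of p q] by blast
  then show "x \<in> B" using Badd \<open>ks p \<subseteq> B\<close> \<open>ks q \<subseteq> B\<close> by blast
qed
lemma c_one: "ks (1::'k::field pm) \<subseteq> B" using B0 by simp
lemma c_sum: "finite I \<Longrightarrow> (\<And>i. i \<in> I \<Longrightarrow> ks (f i) \<subseteq> B) \<Longrightarrow> ks (\<Sum>i\<in>I. f i :: 'k::field pm) \<subseteq> B"
  by (induction I rule: finite_induct) (simp_all add: c_add)
lemma c_prod: "finite I \<Longrightarrow> (\<And>i. i \<in> I \<Longrightarrow> ks (f i) \<subseteq> B) \<Longrightarrow> ks (\<Prod>i\<in>I. f i :: 'k::field pm) \<subseteq> B"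
  by (induction I rule: finite_induct) (simp_all add: c_mult B0)
lemma c_pow: "ks (p :: 'k::field pm) \<subseteq> B \<Longrightarrow> ks (p ^ k) \<subseteq> B"
  by (induction k) (simp_all add: c_mult B0)
lemma c_C: "ks (Poly_Mapping.single 0 (a::'k::field)) \<subseteq> B" using B0 by simp
lemma c_single: "b \<in> B \<Longrightarrow> ks (Poly_Mapping.single b c) \<subseteq> B" by simp

lemma R_cring: "cring (R::'k::field pm ring)"
proof (rule cringI)
  show "abelian_group (R::'k::field pm ring)"
  proof (rule abelian_groupI)
    fix x y z :: "'k pm"
    assume x: "x \<in> carrier (R::'k pm ring)" and y: "y \<in> carrier (R::'k pm ring)"
       and z: "z \<in> carrier (R::'k pm ring)"
    show "x \<oplus>\<^bsub>R\<^esub> y \<in> carrier (R::'k pm ring)" using x y c_add by (simp add: semigroup_ring_carrier_def)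
    show "(x \<oplus>\<^bsub>R\<^esub> y) \<oplus>\<^bsub>R\<^esub> z = x \<oplus>\<^bsub>R\<^esub> (y \<oplus>\<^bsub>R\<^esub> z)" by (simp add: add.assoc)
    show "x \<oplus>\<^bsub>R\<^esub> y = y \<oplus>\<^bsub>R\<^esub> x" by (simp add: add.commute)
    show "\<zero>\<^bsub>R\<^esub> \<oplus>\<^bsub>R\<^esub> x = x" by simp
    show "\<exists>y\<in>carrier (R::'k pm ring). y \<oplus>\<^bsub>R\<^esub> x = \<zero>\<^bsub>R\<^esub>"
      by (rule bexI[of _ "-x"]) (use x in \<open>simp_all add: semigroup_ring_carrier_def\<close>)
  next
    show "\<zero>\<^bsub>R\<^esub> \<in> carrier (R::'k pm ring)" by (simp add: semigroup_ring_carrier_def)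
  qed
  show "comm_monoid (R::'k::field pm ring)"
  proof (rule comm_monoidI)
    fix x y z :: "'k pm"
    assume x: "x \<in> carrier (R::'k pm ring)" and y: "y \<in> carrier (R::'k pm ring)"
       and z: "z \<in> carrier (R::'k pm ring)"
    show "x \<otimes>\<^bsub>R\<^esub> y \<in> carrier (R::'k pm ring)" using x y c_mult by (simp add: semigroup_ring_carrier_def)
    show "(x \<otimes>\<^bsub>R\<^esub> y) \<otimes>\<^bsub>R\<^esub> z = x \<otimes>\<^bsub>R\<^esub> (y \<otimes>\<^bsub>R\<^esub> z)" by (simp add: mult.assoc)
    show "x \<otimes>\<^bsub>R\<^esub> y = y \<otimes>\<^bsub>R\<^esub> x" by (simp add: mult.commute)
    show "\<one>\<^bsub>R\<^esub> \<otimes>\<^bsub>R\<^esub> x = x" by simp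
  next
    show "\<one>\<^bsub>R\<^esub> \<in> carrier (R::'k pm ring)" using c_one by (simp add: semigroup_ring_carrier_def)
  qed
next
  fix x y z :: "'k::field pm"
  show "(x \<oplus>\<^bsub>R\<^esub> y) \<otimes>\<^bsub>R\<^esub> z = x \<otimes>\<^bsub>R\<^esub> z \<oplus>\<^bsub>R\<^esub> y \<otimes>\<^bsub>R\<^esub> z"
    by (simp only: sr_simps distrib_right)
qed

lemma R_ainv: "x \<in> carrier (R::'k::field pm ring) \<Longrightarrow> a_inv R x = - x"
proof -
  interpret cring "R::'k::field pm ring" by (rule R_cring)
  assume x: "x \<in> carrier (R::'k::field pm ring)"
  show ?thesis
    by (rule minus_equality) (use x in \<open>auto simp: semigroup_ring_carrier_def\<close>)
qed

lemma R_ideal: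
  assumes "I \<subseteq> carrier (R::'k::field pm ring)" "0 \<in> I"
    and "\<And>a b. a \<in> I \<Longrightarrow> b \<in> I \<Longrightarrow> a + b \<in> I"
    and "\<And>a. a \<in> I \<Longrightarrow> - a \<in> I"
    and "\<And>a x. a \<in> I \<Longrightarrow> x \<in> carrier (R::'k::field pm ring) \<Longrightarrow> x * a \<in> I"
  shows "ideal I (R::'k::field pm ring)"
proof -
  interpret cring "R::'k::field pm ring" by (rule R_cring)
  show ?thesis
  proof (rule idealI)
    show "ring (R::'k::field pm ring)" by (rule ring_axioms)
    show "subgroup I (add_monoid (R::'k::field pm ring))"
    proof (rule subgroup.intro)
      show "I \<subseteq> carrier (add_monoid (R::'k::field pm ring))" using assms(1) by simp
      fix x y assume "x \<in> I" "y \<in> I"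
      then show "x \<otimes>\<^bsub>add_monoid (R::'k::field pm ring)\<^esub> y \<in> I" using assms(3) by simp
    next
      show "\<one>\<^bsub>add_monoid (R::'k::field pm ring)\<^esub> \<in> I" using assms(2) by simp
    next
      fix x assume x: "x \<in> I"
      have "inv\<^bsub>add_monoid (R::'k::field pm ring)\<^esub> x = - x"
        using R_ainv[of x] x assms(1) unfolding a_inv_def by blast
      then show "inv\<^bsub>add_monoid (R::'k::field pm ring)\<^esub> x \<in> I" using assms(4) x by simp
    qed
  next
    fix a x assume "a \<in> I" "x \<in> carrier (R::'k::field pm ring)"
    then show "x \<otimes>\<^bsub>R\<^esub> a \<in> I" "a \<otimes>\<^bsub>R\<^esub> x \<in> I" using assms(5) by (simp_all add: mult.commute)
  qed
qed

end

lemma Nvec_smon: "smon (Nvec n)"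
proof
  show "0 \<in> Nvec n" by (simp add: Nvec_def)
  fix a b assume "a \<in> Nvec n" "b \<in> Nvec n"
  then show "a + b \<in> Nvec n" using keys_add[of a b] by (auto simp: Nvec_def)
qed

definition C :: "'k::field \<Rightarrow> 'k pm" where "C a = Poly_Mapping.single 0 a"

lemma C_add: "C (a + b) = C a + C b" by (simp add: C_def single_add)
lemma C_mult: "C (a * b) = C a * C b" by (simp add: C_def mult_single)
lemma C_one [simp]: "C 1 = 1" by (simp add: C_def)
lemma C_zero [simp]: "C 0 = 0" by (simp add: C_def)
lemma C_uminus: "C (- a) = - C a" by (simp add: C_def single_uminus)
lemma C_single: "C a * Poly_Mapping.single g 1 = Poly_Mapping.single g a"
  by (simp add: C_def mult_single)

interpretation pmvs: vector_space "\<lambda>(c::'k::field) (p::'k pm). C c * p"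
  by unfold_locales (simp_all add: distrib_left distrib_right C_add C_mult mult.assoc)

lemma pm_expand: "p = (\<Sum>g\<in>ks p. Poly_Mapping.single g (lk p g))"
proof (rule poly_mapping_eqI)
  fix k
  have "lk (\<Sum>g\<in>ks p. Poly_Mapping.single g (lk p g)) k = (\<Sum>g\<in>ks p. if g = k then lk p g else 0)"
    by (simp add: lookup_sum lookup_single when_def)
  also have "\<dots> = lk p k" by (simp add: sum.delta' in_keys_iff)
  finally show "lk p k = lk (\<Sum>g\<in>ks p. Poly_Mapping.single g (lk p g)) k" by simp
qed

definition bnd :: "nat \<Rightarrow> 'k::field pm \<Rightarrow> bool" where
  "bnd E p \<longleftrightarrow> (\<forall>g\<in>ks p. \<forall>i. lk g i \<le> E)"

lemma bnd_mult: "bnd a p \<Longrightarrow> bnd b q \<Longrightarrow> bnd (a + b) (p * q)"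
  unfolding bnd_def
proof (intro ballI allI)
  fix g i assume p: "\<forall>g\<in>ks p. \<forall>i. lk g i \<le> a" and q: "\<forall>g\<in>ks q. \<forall>i. lk g i \<le> b"
    and g: "g \<in> ks (p * q)"
  then obtain u v where "g = u + v" "u \<in> ks p" "v \<in> ks q" using keys_mult[of p q] by blast
  then show "lk g i \<le> a + b" using p q by (simp add: lookup_add add_mono)
qed

lemma bnd_one: "bnd 0 1" by (simp add: bnd_def)
lemma bnd_mono: "a \<le> b \<Longrightarrow> bnd a p \<Longrightarrow> bnd b p" by (auto simp: bnd_def intro: order_trans)
lemma bnd_pow: "bnd a p \<Longrightarrow> bnd (k * a) (p ^ k)"
  by (induction k) (simp_all add: bnd_one bnd_mult)
lemma bnd_prod: "finite I \<Longrightarrow> (\<And>i. i \<in> I \<Longrightarrow> bnd (a i) (f i)) \<Longrightarrow> bnd (\<Sum>i\<in>I. a i) (\<Prod>i\<in>I. f i)"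
  by (induction I rule: finite_induct) (simp_all add: bnd_one bnd_mult)


definition mon :: "(nat \<Rightarrow> 'k::field pm) \<Rightarrow> nat \<Rightarrow> (nat \<Rightarrow> nat) \<Rightarrow> 'k pm" where
  "mon y m b = (\<Prod>i\<le>m. y i ^ b i)"

lemma count_ineq: "(K::nat) \<ge> 1 \<Longrightarrow> (K * K^n + 1)^n < (K^n + 1)^(n+1)"
proof -
  assume K: "K \<ge> 1"
  have "(K * K^n + 1)^n \<le> (K * (K^n + 1))^n" by (rule power_mono) (use K in auto)
  also have "\<dots> = K^n * (K^n+1)^n" by (rule power_mult_distrib)
  also have "\<dots> < (K^n+1) * (K^n+1)^n" using K by simp
  also have "\<dots> = (K^n+1)^(n+1)" by simp
  finally show ?thesis .
qed

lemma card_G: "finite {g \<in> Nvec n. \<forall>i. lk g i \<le> M} \<and> card {g \<in> Nvec n. \<forall>i. lk g i \<le> M} \<le> (M+1)^n"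
proof -
  let ?G = "{g \<in> Nvec n. \<forall>i. lk g i \<le> M}"
  let ?f = "\<lambda>g. restrict (lk g) {..<n}"
  have inj: "inj_on ?f ?G"
  proof (rule inj_onI)
    fix a b assume a: "a \<in> ?G" and b: "b \<in> ?G" and e: "?f a = ?f b"
    show "a = b"
    proof (rule poly_mapping_eqI)
      fix i show "lk a i = lk b i"
      proof (cases "i < n")
        case True then show ?thesis using fun_cong[OF e, of i] by simp
      next
        case False then have "i \<notin> ks a" "i \<notin> ks b" using a b by (auto simp: Nvec_def)
        then show ?thesis by (simp add: in_keys_iff)
      qed
    qed
  qed
  have sub: "?f ` ?G \<subseteq> ({..<n} \<rightarrow>\<^sub>E {..M})" by (rule image_subsetI) (simp add: restrict_PiE_iff)
  have fin: "finite ({..<n} \<rightarrow>\<^sub>E {..M})" by (simp add: finite_PiE)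
  have "finite ?G" using finite_imageD[OF finite_subset[OF sub fin] inj] .
  moreover have "card ?G \<le> (M+1)^n"
    using card_image[OF inj] card_mono[OF fin sub] by (simp add: card_PiE)
  ultimately show ?thesis by blast
qed

lemma alg_dep:
  fixes y :: "nat \<Rightarrow> 'k::field pm"
  assumes Y: "\<And>i. i \<le> n \<Longrightarrow> ks (y i) \<subseteq> Nvec n"
  shows "\<exists>A c D. finite A \<and> A \<noteq> {} \<and> A \<subseteq> ({..n} \<rightarrow>\<^sub>E {..(D::nat)}) \<and> (\<forall>b\<in>A. c b \<noteq> (0::'k)) \<and>
     (\<Sum>b\<in>A. C (c b) * mon y n b) = 0"
proof -
  interpret NV: smon "Nvec n" by (rule Nvec_smon)
  define E where "E = (\<Sum>i\<le>n. \<Sum>g\<in>ks (y i). \<Sum>j<n. lk g j)"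
  have bE: "bnd E (y i)" if "i \<le> n" for i
    unfolding bnd_def
  proof (intro ballI allI)
    fix g j assume g: "g \<in> ks (y i)"
    show "lk g j \<le> E"
    proof (cases "j < n")
      case True
      have "lk g j \<le> (\<Sum>j<n. lk g j)" by (rule member_le_sum) (use True in auto)
      also have "\<dots> \<le> (\<Sum>g\<in>ks (y i). \<Sum>j<n. lk g j)" by (rule member_le_sum) (use g in auto)
      also have "\<dots> \<le> E" unfolding E_def
        by (rule member_le_sum[of i "{..n}" "\<lambda>i. (\<Sum>g\<in>ks (y i). \<Sum>j<n. lk g j)"]) (use that in auto)
      finally show ?thesis .
    next
      case False
      then have "j \<notin> ks g" using Y[OF that] g by (auto simp: Nvec_def)
      then show ?thesis by (simp add: in_keys_iff)
    qed
  qed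
  define K where "K = (n+1)*E + 1"
  define D where "D = K^n"
  define Box where "Box = ({..n} \<rightarrow>\<^sub>E {..D})"
  define G where "G = {g \<in> Nvec n. \<forall>i. lk g i \<le> K*D}"
  define W where "W = (\<lambda>g. Poly_Mapping.single g (1::'k)) ` G"
  have finG: "finite G" and cardG: "card G \<le> (K*D+1)^n" using card_G[of n "K*D"] unfolding G_def by auto
  have finW: "finite W" unfolding W_def using finG by simp
  have cardW: "card W \<le> (K*D+1)^n" unfolding W_def using card_image_le[OF finG] cardG le_trans by blast
  have finBox: "finite Box" unfolding Box_def by (simp add: finite_PiE)
  have cardBox: "card Box = (D+1)^(n+1)" unfolding Box_def by (simp add: card_PiE)
  have lt: "(K*D+1)^n < (D+1)^(n+1)" unfolding D_def K_def by (rule count_ineq) simp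
  have span: "mon y n b \<in> pmvs.span W" if "b \<in> Box" for b
  proof -
    have bb: "bnd (\<Sum>i\<le>n. b i * E) (mon y n b)" unfolding mon_def
      by (rule bnd_prod) (auto intro: bnd_pow bE)
    have "(\<Sum>i\<le>n. b i * E) \<le> (\<Sum>i\<le>n. D * E)"
      by (rule sum_mono) (use that in \<open>auto simp: Box_def PiE_def Pi_def\<close>)
    also have "\<dots> = (n+1)*D*E" by (simp add: algebra_simps)
    also have "\<dots> \<le> K*D" unfolding K_def by (simp add: algebra_simps)
    finally have b2: "bnd (K*D) (mon y n b)" using bb bnd_mono by blast
    have nv: "ks (mon y n b) \<subseteq> Nvec n" unfolding mon_def by (intro NV.c_prod NV.c_pow) (simp_all add: Y)
    have sub: "ks (mon y n b) \<subseteq> G" using b2 nv unfolding G_def bnd_def by auto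
    show ?thesis
    proof (subst pm_expand, rule pmvs.span_sum)
      fix g assume "g \<in> ks (mon y n b)"
      then have "Poly_Mapping.single g (1::'k) \<in> pmvs.span W" using sub
        unfolding W_def by (intro pmvs.span_base) auto
      then have "C (lk (mon y n b) g) * Poly_Mapping.single g (1::'k) \<in> pmvs.span W"
        by (rule pmvs.span_scale)
      then show "Poly_Mapping.single g (lk (mon y n b) g) \<in> pmvs.span W" by (simp add: C_single)
    qed
  qed
  show ?thesis
  proof (cases "inj_on (mon y n) Box")
    case True
    have "card (mon y n ` Box) = (D+1)^(n+1)" using card_image[OF True] cardBox by simp
    hence "\<not> (card (mon y n ` Box) \<le> card W)" using cardW lt by linarith
    hence "pmvs.dependent (mon y n ` Box)"
      using pmvs.independent_span_bound[OF finW, of "mon y n ` Box"] span by blast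
    then obtain t u where t: "finite t" "t \<subseteq> mon y n ` Box" "(\<Sum>v\<in>t. C (u v) * v) = 0" "\<exists>v\<in>t. u v \<noteq> 0"
      unfolding pmvs.dependent_explicit by blast
    define A where "A = {b\<in>Box. mon y n b \<in> t \<and> u (mon y n b) \<noteq> 0}"
    have AB: "A \<subseteq> Box" unfolding A_def by auto
    have img: "mon y n ` A = {v\<in>t. u v \<noteq> 0}" using t(2) unfolding A_def by auto
    have "(\<Sum>b\<in>A. C (u (mon y n b)) * mon y n b) = (\<Sum>v\<in>mon y n ` A. C (u v) * v)"
      using sum.reindex[OF inj_on_subset[OF True AB], of "\<lambda>v. C (u v) * v"] by simp
    also have "\<dots> = (\<Sum>v\<in>t. C (u v) * v)" unfolding img
      by (rule sum.mono_neutral_left) (use t(1) in auto)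
    also have "\<dots> = 0" by (rule t(3))
    finally have s: "(\<Sum>b\<in>A. C (u (mon y n b)) * mon y n b) = 0" .
    have nA: "A \<noteq> {}" using t(4) t(2) unfolding A_def by auto
    have fA: "finite A" using AB finBox finite_subset by blast
    have cnz: "\<forall>b\<in>A. u (mon y n b) \<noteq> 0" by (simp add: A_def)
    have AD: "A \<subseteq> ({..n} \<rightarrow>\<^sub>E {..D})" using AB unfolding Box_def .
    show ?thesis
      apply (intro exI[of _ A] exI[of _ "\<lambda>b. u (mon y n b)"] exI[of _ D])
      using fA nA cnz AD s by simp
  next
    case False
    then obtain b1 b2 where bb: "b1\<in>Box" "b2\<in>Box" "b1\<noteq>b2" "mon y n b1 = mon y n b2"
      unfolding inj_on_def by blast
    let ?c = "\<lambda>b. if b = b1 then (1::'k) else -1"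
    have "(\<Sum>b\<in>{b1,b2}. C (?c b) * mon y n b) = 0" using bb by (simp add: C_uminus)
    then show ?thesis using bb unfolding Box_def
      by (intro exI[of _ "{b1,b2}"] exI[of _ ?c] exI[of _ D]) auto
  qed
qed


primrec Aseq :: "(nat \<Rightarrow> nat) set \<Rightarrow> nat \<Rightarrow> (nat \<Rightarrow> nat) set" where
  "Aseq A 0 = A"
| "Aseq A (Suc j) = {b \<in> Aseq A j. b j = Min ((\<lambda>b. b j) ` Aseq A j)}"

lemma Aseq_sub: "Aseq A j \<subseteq> A" by (induction j) auto

lemma Aseq_ne: "finite A \<Longrightarrow> A \<noteq> {} \<Longrightarrow> Aseq A j \<noteq> {}"
proof (induction j)
  case (Suc j)
  have "finite (Aseq A j)" using Aseq_sub[of A j] Suc.prems finite_subset by blast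
  then have "Min ((\<lambda>b. b j) ` Aseq A j) \<in> (\<lambda>b. b j) ` Aseq A j" using Suc by (intro Min_in) auto
  then show ?case by auto
qed simp

lemma Aseq_agree: "b \<in> Aseq A j \<Longrightarrow> b' \<in> Aseq A j \<Longrightarrow> i < j \<Longrightarrow> b i = b' i"
proof (induction j arbitrary: i)
  case (Suc j)
  then show ?case by (cases "i = j") auto
qed simp

lemma Aseq_gt: "finite A \<Longrightarrow> b \<in> Aseq A j \<Longrightarrow> b \<notin> Aseq A (Suc j) \<Longrightarrow> b j > Min ((\<lambda>b. b j) ` Aseq A j)"
proof -
  assume f: "finite A" and b: "b \<in> Aseq A j" "b \<notin> Aseq A (Suc j)"
  have "finite (Aseq A j)" using Aseq_sub[of A j] f finite_subset by blast
  then have "Min ((\<lambda>b. b j) ` Aseq A j) \<le> b j" using b by (intro Min_le) auto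
  moreover have "b j \<noteq> Min ((\<lambda>b. b j) ` Aseq A j)" using b by auto
  ultimately show ?thesis by simp
qed

context smon begin

lemma pi_facts:
  assumes "primeideal P (R::'k::field pm ring)"
  shows "P \<subseteq> carrier (R::'k::field pm ring)" and "0 \<in> P"
    and "\<And>a b. a \<in> P \<Longrightarrow> b \<in> P \<Longrightarrow> a + b \<in> P" and "\<And>a. a \<in> P \<Longrightarrow> -a \<in> P"
    and "\<And>a x. a \<in> P \<Longrightarrow> x \<in> carrier (R::'k::field pm ring) \<Longrightarrow> x * a \<in> P"
    and "\<And>a b. a \<in> carrier (R::'k::field pm ring) \<Longrightarrow> b \<in> carrier (R::'k::field pm ring) \<Longrightarrow> a * b \<in> P \<Longrightarrow> a \<in> P \<or> b \<in> P"
    and "1 \<notin> P"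
proof -
  interpret primeideal P "R::'k::field pm ring" by (rule assms)
  have as: "additive_subgroup P (R::'k::field pm ring)" by (rule is_additive_subgroup)
  show "P \<subseteq> carrier (R::'k::field pm ring)" by (rule a_subset)
  show "0 \<in> P" using additive_subgroup.zero_closed[OF as] by simp
  show "\<And>a b. a \<in> P \<Longrightarrow> b \<in> P \<Longrightarrow> a + b \<in> P" using additive_subgroup.a_closed[OF as] by simp
  show "\<And>a. a \<in> P \<Longrightarrow> -a \<in> P"
  proof -
    fix a assume a: "a \<in> P"
    have "a_inv R a \<in> P" using additive_subgroup.a_inv_closed[OF as a] .
    moreover have "a_inv R a = - a" using R_ainv[of a] a a_subset by blast
    ultimately show "-a \<in> P" by simp
  qed
  show "\<And>a x. a \<in> P \<Longrightarrow> x \<in> carrier (R::'k::field pm ring) \<Longrightarrow> x * a \<in> P" using I_l_closed by simp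
  show "\<And>a b. a \<in> carrier (R::'k::field pm ring) \<Longrightarrow> b \<in> carrier (R::'k::field pm ring) \<Longrightarrow> a * b \<in> P \<Longrightarrow> a \<in> P \<or> b \<in> P"
    using I_prime by simp
  show "1 \<notin> P"
  proof
    assume "1 \<in> P"
    then have "carrier (R::'k::field pm ring) = P" using one_imp_carrier by simp
    then show False using I_notcarr by simp
  qed
qed

lemma pow_notin:
  assumes "primeideal P (R::'k::field pm ring)" "y \<in> carrier (R::'k::field pm ring)" "y \<notin> P"
  shows "y ^ m \<notin> P"
proof (induction m)
  case 0 then show ?case using pi_facts(7)[OF assms(1)] by simp
next
  case (Suc m)
  have "y ^ m \<in> carrier (R::'k::field pm ring)" using assms(2) c_pow by (simp add: semigroup_ring_carrier_def)
  then show ?case using pi_facts(6)[OF assms(1) assms(2), of "y ^ m"] Suc assms(3) by auto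
qed

lemma no_long_chain:
  assumes BN: "B \<subseteq> Nvec n"
    and P: "\<And>i. i \<le> Suc n \<Longrightarrow> primeideal (P i) (R::'k::field pm ring)"
    and mono: "\<And>i. i \<le> n \<Longrightarrow> P i \<subset> P (Suc i)"
  shows False
proof -
  have "\<forall>i. \<exists>z. i \<le> n \<longrightarrow> z \<in> P (Suc i) \<and> z \<notin> P i" using mono by blast
  then obtain y where y: "\<And>i. i \<le> n \<Longrightarrow> y i \<in> P (Suc i) \<and> y i \<notin> P i" by metis
  have yc: "y i \<in> carrier (R::'k::field pm ring)" if "i \<le> n" for i
    using y[OF that] pi_facts(1)[OF P[of "Suc i"]] that by auto
  have yB: "ks (y i) \<subseteq> B" if "i \<le> n" for i using yc[OF that] by (simp add: semigroup_ring_carrier_def)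
  obtain A c D where A: "finite A" "A \<noteq> {}" "A \<subseteq> ({..n} \<rightarrow>\<^sub>E {..(D::nat)})" "\<forall>b\<in>A. c b \<noteq> (0::'k)"
     "(\<Sum>b\<in>A. C (c b) * mon y n b) = 0"
    using alg_dep[of n y] yB BN by blast
  define F where "F j = (\<Sum>b\<in>Aseq A j. C (c b) * (\<Prod>i\<in>{j..n}. y i ^ b i))" for j
  have finAs: "finite (Aseq A j)" for j using Aseq_sub[of A j] A(1) finite_subset by blast
  have Cc: "ks (C a) \<subseteq> B" for a unfolding C_def by (rule c_C)
  have prc: "ks (\<Prod>i\<in>{j..n}. y i ^ b i) \<subseteq> B" for j b by (intro c_prod c_pow) (simp_all add: yB)
  have Fc: "ks (F j) \<subseteq> B" for j unfolding F_def by (intro c_sum c_mult Cc prc finAs)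
  have Fin: "F j \<in> P j" if "j \<le> Suc n" for j
    using that
  proof (induction j)
    case 0
    have "F 0 = (\<Sum>b\<in>A. C (c b) * mon y n b)" unfolding F_def mon_def by (simp add: atLeast0AtMost)
    then show ?case using A(5) pi_facts(2)[OF P[of 0]] by simp
  next
    case (Suc j)
    then have jn: "j \<le> n" by simp
    have IH: "F j \<in> P j" using Suc by simp
    define m where "m = Min ((\<lambda>b. b j) ` Aseq A j)"
    define A1 where "A1 = Aseq A (Suc j)"
    define A2 where "A2 = Aseq A j - A1"
    define G where "G = (\<Sum>b\<in>A2. C (c b) * (y j ^ (b j - Suc m) * (\<Prod>i\<in>{Suc j..n}. y i ^ b i)))"
    have A1s: "A1 \<subseteq> Aseq A j" unfolding A1_def by auto
    have split: "(\<Prod>i\<in>{j..n}. y i ^ b i) = y j ^ b j * (\<Prod>i\<in>{Suc j..n}. y i ^ b i)" for b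
      using prod.atLeast_Suc_atMost[OF jn] by simp
    have "F j = (\<Sum>b\<in>A2. C (c b) * (\<Prod>i\<in>{j..n}. y i ^ b i)) + (\<Sum>b\<in>A1. C (c b) * (\<Prod>i\<in>{j..n}. y i ^ b i))"
      unfolding F_def A2_def using sum.subset_diff[OF A1s finAs] by simp
    also have "(\<Sum>b\<in>A1. C (c b) * (\<Prod>i\<in>{j..n}. y i ^ b i)) = (\<Sum>b\<in>A1. y j ^ m * (C (c b) * (\<Prod>i\<in>{Suc j..n}. y i ^ b i)))"
      by (rule sum.cong) (auto simp: split A1_def m_def)
    also have "\<dots> = y j ^ m * F (Suc j)" unfolding F_def A1_def by (simp add: sum_distrib_left)
    also have "(\<Sum>b\<in>A2. C (c b) * (\<Prod>i\<in>{j..n}. y i ^ b i)) = (\<Sum>b\<in>A2. y j ^ m * (y j * (C (c b) * (y j ^ (b j - Suc m) * (\<Prod>i\<in>{Suc j..n}. y i ^ b i)))))"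
    proof (rule sum.cong)
      fix b assume b: "b \<in> A2"
      have "b j > m" unfolding m_def using Aseq_gt[OF A(1)] b unfolding A2_def A1_def by blast
      then have "b j = m + 1 + (b j - Suc m)" by simp
      then have "y j ^ b j = y j ^ m * (y j * y j ^ (b j - Suc m))"
        by (metis power_add power_one_right mult.assoc)
      then show "C (c b) * (\<Prod>i\<in>{j..n}. y i ^ b i) = y j ^ m * (y j * (C (c b) * (y j ^ (b j - Suc m) * (\<Prod>i\<in>{Suc j..n}. y i ^ b i))))"
        by (simp add: split mult_ac)
    qed simp
    also have "\<dots> = y j ^ m * (y j * G)" unfolding G_def by (simp add: sum_distrib_left)
    finally have dec: "F j = y j ^ m * (F (Suc j) + y j * G)" by (simp add: distrib_left)
    have Gc: "ks G \<subseteq> B" unfolding G_def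
      by (intro c_sum c_mult Cc c_pow yB jn prc) (use finAs[of j] in \<open>simp add: A2_def\<close>)
    have ymc: "y j ^ m \<in> carrier (R::'k::field pm ring)" using c_pow[OF yB[OF jn]] by (simp add: semigroup_ring_carrier_def)
    have sc: "F (Suc j) + y j * G \<in> carrier (R::'k::field pm ring)"
      using c_add[OF Fc c_mult[OF yB[OF jn] Gc]] by (simp add: semigroup_ring_carrier_def)
    have "y j ^ m \<notin> P j" by (rule pow_notin[OF P yc]) (use jn y in auto)
    then have s1: "F (Suc j) + y j * G \<in> P j" using pi_facts(6)[OF P[of j] ymc sc] IH dec jn by auto
    have s2: "F (Suc j) + y j * G \<in> P (Suc j)" using s1 mono[OF jn] by auto
    have s3: "G * y j \<in> P (Suc j)" using pi_facts(5)[OF P[of "Suc j"]] y[OF jn] Gc jn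
      by (simp add: semigroup_ring_carrier_def)
    have "F (Suc j) = (F (Suc j) + y j * G) + - (G * y j)" by (simp add: mult.commute)
    then show ?case using pi_facts(3,4)[OF P[of "Suc j"]] s2 s3 Suc.prems by metis
  qed
  have ne: "Aseq A (Suc n) \<noteq> {}" using Aseq_ne A(1,2) by blast
  then obtain b0 where b0: "b0 \<in> Aseq A (Suc n)" by blast
  have single: "Aseq A (Suc n) = {b0}"
  proof
    show "Aseq A (Suc n) \<subseteq> {b0}"
    proof
      fix b assume b: "b \<in> Aseq A (Suc n)"
      have "b \<in> ({..n} \<rightarrow>\<^sub>E {..D})" "b0 \<in> ({..n} \<rightarrow>\<^sub>E {..D})" using b b0 Aseq_sub A(3) by blast+
      moreover have "\<forall>i\<le>n. b i = b0 i" using Aseq_agree[OF b b0] by simp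
      ultimately have "b = b0" by (intro PiE_ext) auto
      then show "b \<in> {b0}" by simp
    qed
  qed (use b0 in simp)
  have "F (Suc n) = C (c b0)" unfolding F_def single by simp
  then have Cin: "C (c b0) \<in> P (Suc n)" using Fin[of "Suc n"] by simp
  have c0: "c b0 \<noteq> 0" using A(4) b0 Aseq_sub by blast
  have "C (inverse (c b0)) * C (c b0) = 1" using c0 by (simp flip: C_mult)
  moreover have "C (inverse (c b0)) * C (c b0) \<in> P (Suc n)"
    using pi_facts(5)[OF P[of "Suc n"] Cin, of "C (inverse (c b0))"] Cc[of "inverse (c b0)"] by (simp add: semigroup_ring_carrier_def)
  ultimately show False using pi_facts(7)[OF P[of "Suc n"]] by simp
qed

end

definition deg :: "nat \<Rightarrow> (nat \<Rightarrow>\<^sub>0 nat) \<Rightarrow> nat" where "deg n g = (\<Sum>i<n. lk g i)"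

lemma deg_add: "deg n (a + b) = deg n a + deg n b"
  by (simp add: deg_def lookup_add sum.distrib)

lemma Nvec_lk: "g \<in> Nvec n \<Longrightarrow> \<not> i < n \<Longrightarrow> lk g i = 0"
  by (auto simp: Nvec_def in_keys_iff)

lemma Nvec_zero: "g \<in> Nvec n \<Longrightarrow> deg n g = 0 \<Longrightarrow> g = 0"
proof (rule poly_mapping_eqI)
  fix i assume g: "g \<in> Nvec n" "deg n g = 0"
  show "lk g i = lk 0 i"
  proof (cases "i < n")
    case True then show ?thesis using g(2) by (simp add: deg_def)
  next
    case False then show ?thesis using Nvec_lk[OF g(1)] by simp
  qed
qed

lemma Nvec_add: "a \<in> Nvec n \<Longrightarrow> b \<in> Nvec n \<Longrightarrow> a + b \<in> Nvec n"
  using keys_add[of a b] by (auto simp: Nvec_def)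

lemma Nvec_le: assumes w: "w \<in> Nvec n" and le: "\<And>l. lk v l \<le> lk w l" shows "v \<in> Nvec n"
  unfolding Nvec_def
proof (rule, rule subsetI)
  fix x assume x: "x \<in> ks v"
  have "lk v x \<noteq> 0" using x by (simp add: in_keys_iff)
  then have "lk w x \<noteq> 0" using le[of x] by linarith
  then have "x \<in> ks w" by (simp add: in_keys_iff)
  then show "x \<in> {..<n}" using w by (auto simp: Nvec_def)
qed

lemma sum_upd:
  assumes "finite A" "j \<in> A" "\<And>l. l \<in> A \<Longrightarrow> l \<noteq> j \<Longrightarrow> f l = g l"
  shows "sum f A + g j = sum g A + (f j :: nat)"
proof -
  have "sum f A = f j + sum f (A - {j})" using sum.remove[OF assms(1,2)] by simp
  moreover have "sum g A = g j + sum g (A - {j})" using sum.remove[OF assms(1,2)] by simp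
  moreover have "sum f (A - {j}) = sum g (A - {j})" using assms(3) by (intro sum.cong) auto
  ultimately show ?thesis by simp
qed

lemma div_pred1: assumes q: "q > 0" and h: "(x::nat) mod q \<noteq> 0" shows "(x - 1) div q = x div q"
proof (rule div_nat_eqI)
  have x: "x = q * (x div q) + x mod q" by simp
  have r: "x mod q < q" using q by simp
  show "q * (x div q) \<le> x - 1" using x h by linarith
  have "q * Suc (x div q) = q * (x div q) + q" by simp
  then show "x - 1 < q * Suc (x div q)" using x r by linarith
qed

lemma div_pred2: "(x::nat) div q \<le> (x - 1) div q + 1"
proof (cases "q = 0")
  case False
  have "x \<le> (x - 1) + 1" by simp
  then have "x div q \<le> ((x - 1) + 1) div q" by (rule div_le_mono)
  also have "\<dots> \<le> ((x - 1) + q) div q" using False by (intro div_le_mono) simp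
  also have "\<dots> = (x - 1) div q + 1" using False by simp
  finally show ?thesis .
qed simp


locale cfg =
  fixes n d :: nat and U :: "(nat \<Rightarrow>\<^sub>0 nat) set"
  assumes n2: "n \<ge> 2" and d2: "d > 2"
    and Ubig: "{m \<in> T n d. maxv n m \<ge> d - 1} \<subseteq> U" and Usub: "U \<subset> T n d"
begin

abbreviation "B \<equiv> gen_semigroup U"

lemma U_T: "u \<in> U \<Longrightarrow> u \<in> Nvec n \<and> deg n u = d"
  using Usub by (auto simp: T_def deg_def)

lemma B_Nvec: "b \<in> B \<Longrightarrow> b \<in> Nvec n \<and> d dvd deg n b"
proof (induction b rule: gen_semigroup.induct)
  case zero then show ?case by (simp add: Nvec_def deg_def)
next
  case (add u b)
  then show ?case using U_T[of u] Nvec_add by (simp add: deg_add)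
qed

lemma B_deg_d: assumes "b \<in> B" "deg n b = d" shows "b \<in> U"
  using assms(1)
proof (cases rule: gen_semigroup.cases)
  case zero
  then show ?thesis using assms(2) d2 by (simp add: deg_def)
next
  case (add u b')
  from assms(2) have "deg n b' = 0" using add U_T[of u] by (simp add: deg_add)
  then have "b' = 0" using Nvec_zero B_Nvec[of b'] add by blast
  then show ?thesis using add by simp
qed

lemma a_in_U:
  assumes i: "i < n" and j: "j < n"
  shows "Poly_Mapping.single i (d - 1) + Poly_Mapping.single j 1 \<in> U"
proof -
  let ?a = "Poly_Mapping.single i (d - 1) + Poly_Mapping.single j (1::nat)"
  have lka: "lk ?a l = (if l = i then d - 1 else 0) + (if l = j then 1 else 0)" for l
    by (simp add: lookup_add lookup_single when_def eq_commute)
  have nv: "?a \<in> Nvec n" using keys_add[of "Poly_Mapping.single i (d - 1)" "Poly_Mapping.single j (1::nat)"] i j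
    by (auto simp: Nvec_def split: if_splits)
  have "(\<Sum>l<n. lk ?a l) = (\<Sum>l<n. (if l = i then d - 1 else 0)) + (\<Sum>l<n. (if l = j then 1 else 0))"
    unfolding lka by (rule sum.distrib)
  also have "\<dots> = d" using i j d2 by simp
  finally have T: "?a \<in> T n d" using nv by (simp add: T_def)
  have "d - 1 \<le> lk ?a i" unfolding lka by simp
  also have "lk ?a i \<le> maxv n ?a" unfolding maxv_def using i by (intro Max_ge) auto
  finally have "?a \<in> {m \<in> T n d. maxv n m \<ge> d - 1}" using T by simp
  then show ?thesis using Ubig by (rule subsetD[rotated])
qed

lemma decomp: "w \<in> Nvec n \<Longrightarrow> deg n w = k * d \<Longrightarrow> k \<le> (\<Sum>i<n. lk w i div (d - 1)) \<Longrightarrow> w \<in> B"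
proof (induction k arbitrary: w)
  case 0
  then have "w = 0" using Nvec_zero by simp
  then show ?case by (simp add: gen_semigroup.zero)
next
  case (Suc k)
  define q where "q = d - 1"
  have q2: "q \<ge> 2" "q < d" "d = q + 1" using d2 unfolding q_def by auto
  have "\<exists>i<n. q \<le> lk w i"
  proof (rule ccontr)
    assume "\<not> ?thesis"
    then have "(\<Sum>i<n. lk w i div q) = 0" by (auto simp: not_le div_less)
    then show False using Suc.prems(3) unfolding q_def by simp
  qed
  then obtain i where i: "i < n" "q \<le> lk w i" by blast
  define v where "v = w - Poly_Mapping.single i q"
  have lkv: "lk v l = lk w l - (if l = i then q else 0)" for l
    unfolding v_def by (cases "l = i") (simp_all add: lookup_minus lookup_single when_def)
  have vN: "v \<in> Nvec n" using Suc.prems(1) by (rule Nvec_le) (simp add: lkv)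
  have "(\<Sum>l<n. lk v l) + lk w i = (\<Sum>l<n. lk w l) + lk v i"
    by (rule sum_upd) (use i in \<open>auto simp: lkv\<close>)
  then have degv: "deg n v = k * d + 1" using Suc.prems(2) i q2 unfolding deg_def by (simp add: lkv)
  have "(\<Sum>l<n. lk v l div q) + lk w i div q = (\<Sum>l<n. lk w l div q) + lk v i div q"
    by (rule sum_upd) (use i in \<open>auto simp: lkv\<close>)
  moreover have "lk v i div q + 1 = lk w i div q"
  proof -
    have e: "(lk w i - q) + q = lk w i" using i by simp
    have "((lk w i - q) + q) div q = (lk w i - q) div q + 1" using q2 div_add_self2[of q "lk w i - q"] by simp
    then have "lk w i div q = (lk w i - q) div q + 1" unfolding e .
    then show ?thesis by (simp add: lkv)
  qed
  ultimately have Sv: "k \<le> (\<Sum>l<n. lk v l div q)" using Suc.prems(3) unfolding q_def[symmetric] by linarith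
  obtain j where j: "j < n" "1 \<le> lk v j" "k + lk v j div q \<le> (\<Sum>l<n. lk v l div q) + (lk v j - 1) div q"
  proof (cases "\<exists>j<n. lk v j mod q \<noteq> 0")
    case True
    then obtain j where j: "j < n" "lk v j mod q \<noteq> 0" by blast
    then have "1 \<le> lk v j" by (cases "lk v j") auto
    moreover have "(lk v j - 1) div q = lk v j div q" using div_pred1[OF _ j(2)] q2 by simp
    ultimately show ?thesis using that j Sv by simp
  next
    case False
    then have "(\<Sum>l<n. lk v l) = (\<Sum>l<n. q * (lk v l div q))"
      by (intro sum.cong) (auto simp: mult_div_mod_eq[symmetric])
    then have "q * (\<Sum>l<n. lk v l div q) = k * d + 1" using degv unfolding deg_def by (simp add: sum_distrib_left)
    moreover have "q * k < k * d + 1" using q2 by (simp add: mult.commute mult_le_mono1 le_imp_less_Suc less_imp_le)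
    ultimately have Sv2: "k + 1 \<le> (\<Sum>l<n. lk v l div q)"
    proof -
      assume a1: "q * (\<Sum>l<n. lk v l div q) = k * d + 1" and a2: "q * k < k * d + 1"
      show ?thesis
      proof (rule ccontr)
        assume "\<not> k + 1 \<le> (\<Sum>l<n. lk v l div q)"
        then have "(\<Sum>l<n. lk v l div q) \<le> k" by simp
        then have "q * (\<Sum>l<n. lk v l div q) \<le> q * k" by (rule mult_le_mono2)
        then show False using a1 a2 by linarith
      qed
    qed
    have "\<exists>j<n. 1 \<le> lk v j"
    proof (rule ccontr)
      assume "\<not> ?thesis"
      then have "deg n v = 0" unfolding deg_def by (auto simp: not_le)
      then show False using degv by simp
    qed
    then obtain j where j: "j < n" "1 \<le> lk v j" by blast
    have "lk v j div q \<le> (lk v j - 1) div q + 1" by (rule div_pred2)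
    then show ?thesis using that j Sv2 by simp
  qed
  define v' where "v' = v - Poly_Mapping.single j 1"
  have lkv': "lk v' l = lk v l - (if l = j then 1 else 0)" for l
    unfolding v'_def by (cases "l = j") (simp_all add: lookup_minus lookup_single when_def)
  have v'N: "v' \<in> Nvec n" using vN by (rule Nvec_le) (simp add: lkv')
  have "(\<Sum>l<n. lk v' l) + lk v j = (\<Sum>l<n. lk v l) + lk v' j"
    by (rule sum_upd) (use j in \<open>auto simp: lkv'\<close>)
  then have degv': "deg n v' = k * d" using degv j unfolding deg_def by (simp add: lkv')
  have "(\<Sum>l<n. lk v' l div q) + lk v j div q = (\<Sum>l<n. lk v l div q) + lk v' j div q"
    by (rule sum_upd) (use j in \<open>auto simp: lkv'\<close>)
  then have Sv': "k \<le> (\<Sum>l<n. lk v' l div (d - 1))" using j(3) unfolding q_def[symmetric] by (simp add: lkv')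
  have v'B: "v' \<in> B" using Suc.IH[OF v'N degv' Sv'] .
  have "w = (Poly_Mapping.single i (d - 1) + Poly_Mapping.single j 1) + v'"
  proof (rule poly_mapping_eqI)
    fix l
    show "lk w l = lk (Poly_Mapping.single i (d - 1) + Poly_Mapping.single j 1 + v') l"
      using i j unfolding q_def[symmetric]
      by (auto simp: lookup_add lookup_single when_def lkv' lkv)
  qed
  then show ?case using gen_semigroup.add[OF a_in_U[OF i(1) j(1)] v'B] by simp
qed


lemma decomp_big:
  assumes w: "w \<in> Nvec n" and dg: "deg n w = k * d" and k: "n * (d - 2) \<le> k"
  shows "w \<in> B"
proof (rule decomp[OF w dg])
  define q where "q = d - 1"
  have q: "q > 0" "d = q + 1" "d - 2 = q - 1" using d2 unfolding q_def by auto
  have each: "lk w i \<le> q * (lk w i div q) + (d - 2)" for i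
  proof -
    have "lk w i = q * (lk w i div q) + lk w i mod q" by simp
    moreover have "lk w i mod q < q" using q by simp
    ultimately show ?thesis using q by linarith
  qed
  have "k * d = (\<Sum>i<n. lk w i)" using dg by (simp add: deg_def)
  also have "\<dots> \<le> (\<Sum>i<n. q * (lk w i div q) + (d - 2))" by (rule sum_mono) (rule each)
  also have "\<dots> = q * (\<Sum>i<n. lk w i div q) + n * (d - 2)" by (simp add: sum.distrib sum_distrib_left)
  finally have f1: "k * d \<le> q * (\<Sum>i<n. lk w i div q) + n * (d - 2)" .
  have "k * d = k * q + k" using q(2) by simp
  then have "k * q \<le> q * (\<Sum>i<n. lk w i div q)" using f1 k by linarith
  then have "q * k \<le> q * (\<Sum>i<n. lk w i div q)" by (simp add: mult.commute)
  then show "k \<le> (\<Sum>i<n. lk w i div (d - 1))" using q(1) unfolding q_def by simp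
qed

lemma hole: "\<exists>w0. w0 \<notin> B \<and> (\<forall>b\<in>B. b \<noteq> 0 \<longrightarrow> w0 + b \<in> B)"
proof -
  define P where "P w \<longleftrightarrow> w \<in> Nvec n \<and> d dvd deg n w \<and> w \<notin> B" for w
  obtain m where m: "m \<in> T n d" "m \<notin> U" using Usub by blast
  have Pm: "P m"
  proof -
    have "m \<in> Nvec n" "deg n m = d" using m(1) by (auto simp: T_def deg_def)
    moreover have "m \<notin> B" using B_deg_d m(2) \<open>deg n m = d\<close> by blast
    ultimately show ?thesis unfolding P_def by simp
  qed
  have bound: "\<forall>w. P w \<longrightarrow> deg n w < n * (d - 2) * d + 1"
  proof (intro allI impI)
    fix w assume Pw: "P w"
    then obtain k where k: "deg n w = d * k" unfolding P_def by blast
    have "k < n * (d - 2)"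
    proof (rule ccontr)
      assume "\<not> k < n * (d - 2)"
      then have "w \<in> B" using decomp_big[of w k] Pw k unfolding P_def by (simp add: mult.commute)
      then show False using Pw unfolding P_def by simp
    qed
    then have le: "d * k \<le> d * (n * (d - 2))" by (intro mult_le_mono2) simp
    have "n * (d - 2) * d = d * (n * (d - 2))" by simp
    then show "deg n w < n * (d - 2) * d + 1" using k le by linarith
  qed
  obtain w0 where w0: "P w0" "\<forall>y. P y \<longrightarrow> deg n y \<le> deg n w0"
    using ex_has_greatest_nat[OF Pm bound] by blast
  have main: "w0 + b \<in> B" if "b \<in> B" "b \<noteq> 0" for b
    using that(1)
  proof (cases rule: gen_semigroup.cases)
    case zero then show ?thesis using that(2) by simp
  next
    case (add u b')
    have uT: "u \<in> Nvec n" "deg n u = d" using U_T[OF add(2)] by auto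
    have "w0 + u \<in> B"
    proof (rule ccontr)
      assume nb: "w0 + u \<notin> B"
      have "P (w0 + u)" unfolding P_def using nb w0(1) uT Nvec_add unfolding P_def by (simp add: deg_add)
      then have "deg n (w0 + u) \<le> deg n w0" using w0(2) by blast
      then show False using uT d2 by (simp add: deg_add)
    qed
    then have "(w0 + u) + b' \<in> B" using gs_add add(3) by blast
    then show ?thesis using add(1) by (simp add: add.assoc)
  qed
  show ?thesis using w0(1) main unfolding P_def by blast
qed

end


definition Zc :: "nat \<Rightarrow> (nat \<Rightarrow>\<^sub>0 nat) set" where "Zc j = {g. \<exists>i<j. 0 < lk g i}"

definition Qj :: "(nat \<Rightarrow>\<^sub>0 nat) set \<Rightarrow> nat \<Rightarrow> 'k::field pm set" where
  "Qj B j = {p. ks p \<subseteq> B \<and> ks p \<subseteq> Zc j}"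

lemma Zc_mult1: "ks (p::'k::field pm) \<subseteq> Zc j \<Longrightarrow> ks (p * q) \<subseteq> Zc j"
proof
  fix x assume p: "ks p \<subseteq> Zc j" and x: "x \<in> ks (p * q)"
  then obtain a b where "x = a + b" "a \<in> ks p" "b \<in> ks q" using keys_mult[of p q] by blast
  then show "x \<in> Zc j" using p by (force simp: Zc_def lookup_add)
qed

lemma Zc_mult2: "ks (q::'k::field pm) \<subseteq> Zc j \<Longrightarrow> ks (p * q) \<subseteq> Zc j"
  using Zc_mult1[of q j p] by (simp add: mult.commute)

lemma nZc_mult: "ks (p::'k::field pm) \<subseteq> - Zc j \<Longrightarrow> ks q \<subseteq> - Zc j \<Longrightarrow> ks (p * q) \<subseteq> - Zc j"
proof
  fix x assume p: "ks p \<subseteq> - Zc j" and q: "ks q \<subseteq> - Zc j" and x: "x \<in> ks (p * q)"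
  then obtain a b where "x = a + b" "a \<in> ks p" "b \<in> ks q" using keys_mult[of p q] by blast
  then show "x \<in> - Zc j" using p q by (force simp: Zc_def lookup_add)
qed

definition part :: "'k::field pm \<Rightarrow> (nat \<Rightarrow>\<^sub>0 nat) set \<Rightarrow> 'k pm" where
  "part p S = (\<Sum>g\<in>ks p \<inter> S. Poly_Mapping.single g (lk p g))"

lemma lk_part: "lk (part p S) k = (if k \<in> S then lk p k else 0)"
proof -
  have "lk (part p S) k = (\<Sum>g\<in>ks p \<inter> S. if g = k then lk p g else 0)"
    by (simp add: part_def lookup_sum lookup_single when_def)
  also have "\<dots> = (if k \<in> S then lk p k else 0)" by (simp add: sum.delta' in_keys_iff)
  finally show ?thesis .
qed

lemma ks_part: "ks (part p S) \<subseteq> ks p \<inter> S"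
  by (auto simp: in_keys_iff lk_part split: if_splits)

lemma ks_part_rest: "ks (p - part p S) \<subseteq> - S"
  by (auto simp: in_keys_iff lk_part lookup_minus split: if_splits)

context smon begin

lemma Qj_ideal: "ideal (Qj B j) (R::'k::field pm ring)"
proof (rule R_ideal)
  show "Qj B j \<subseteq> carrier (R::'k::field pm ring)" by (auto simp: Qj_def semigroup_ring_carrier_def)
  show "0 \<in> (Qj B j :: 'k pm set)" by (simp add: Qj_def)
  fix a b :: "'k pm" assume a: "a \<in> Qj B j"
  show "- a \<in> Qj B j" using a by (simp add: Qj_def)
  { assume b: "b \<in> Qj B j"
    show "a + b \<in> Qj B j" using a b keys_add[of a b] c_add[of a b] by (auto simp: Qj_def) }
  { assume b: "b \<in> carrier (R::'k::field pm ring)"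
    show "b * a \<in> Qj B j" using a b c_mult[of b a] Zc_mult2[of a j b]
      by (simp add: Qj_def semigroup_ring_carrier_def) }
qed

lemma Qj_prime: "primeideal (Qj B j) (R::'k::field pm ring)"
proof (rule primeidealI)
  show "ideal (Qj B j) (R::'k::field pm ring)" by (rule Qj_ideal)
  show "cring (R::'k::field pm ring)" by (rule R_cring)
  have "(1::'k pm) \<notin> Qj B j" by (simp add: Qj_def Zc_def)
  moreover have "(1::'k pm) \<in> carrier (R::'k::field pm ring)" using c_one by (simp add: semigroup_ring_carrier_def)
  ultimately show "carrier (R::'k::field pm ring) \<noteq> Qj B j" by blast
  fix a b :: "'k pm"
  assume a: "a \<in> carrier (R::'k::field pm ring)" and b: "b \<in> carrier (R::'k::field pm ring)"
    and ab: "a \<otimes>\<^bsub>R\<^esub> b \<in> Qj B j"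
  show "a \<in> Qj B j \<or> b \<in> Qj B j"
  proof (rule ccontr)
    assume nn: "\<not> (a \<in> Qj B j \<or> b \<in> Qj B j)"
    define pa where "pa = part a (- Zc j)"
    define pb where "pb = part b (- Zc j)"
    have paZ: "ks pa \<subseteq> - Zc j" and pbZ: "ks pb \<subseteq> - Zc j" using ks_part unfolding pa_def pb_def by blast+
    have ra: "ks (a - pa) \<subseteq> Zc j" using ks_part_rest[of a "- Zc j"] unfolding pa_def by simp
    have rb: "ks (b - pb) \<subseteq> Zc j" using ks_part_rest[of b "- Zc j"] unfolding pb_def by simp
    have "pa \<noteq> 0"
    proof
      assume "pa = 0" then have "ks a \<subseteq> Zc j" using ra by simp
      then show False using nn a by (simp add: Qj_def semigroup_ring_carrier_def)
    qed
    moreover have "pb \<noteq> 0"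
    proof
      assume "pb = 0" then have "ks b \<subseteq> Zc j" using rb by simp
      then show False using nn b by (simp add: Qj_def semigroup_ring_carrier_def)
    qed
    ultimately have nz: "pa * pb \<noteq> 0" by simp
    define r where "r = (a - pa) * b + pa * (b - pb)"
    have "ks r \<subseteq> Zc j" unfolding r_def
      using keys_add[of "(a - pa) * b" "pa * (b - pb)"] Zc_mult1[OF ra, of b] Zc_mult2[OF rb, of pa] by blast
    moreover have "ks (a * b) \<subseteq> Zc j" using ab by (simp add: Qj_def)
    moreover have "pa * pb = a * b - r" unfolding r_def by (simp add: algebra_simps)
    ultimately have "ks (pa * pb) \<subseteq> Zc j" using keys_diff[of "a * b" r] by auto
    moreover have "ks (pa * pb) \<subseteq> - Zc j" by (rule nZc_mult[OF paZ pbZ])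
    ultimately have "ks (pa * pb) = {}" by blast
    then show False using nz by simp
  qed
qed

lemma Idl_empty: "Idl\<^bsub>(R::'k::field pm ring)\<^esub> {} = {0}"
proof -
  interpret cring "R::'k::field pm ring" by (rule R_cring)
  have "Idl\<^bsub>(R::'k::field pm ring)\<^esub> {} \<subseteq> {\<zero>\<^bsub>R\<^esub>}" by (rule genideal_minimal[OF zeroideal]) simp
  moreover have "ideal (Idl\<^bsub>(R::'k::field pm ring)\<^esub> {}) R" by (rule genideal_ideal) simp
  then have "\<zero>\<^bsub>R\<^esub> \<in> Idl\<^bsub>(R::'k::field pm ring)\<^esub> {}" by (rule additive_subgroup.zero_closed[OF ideal.axioms(1)])
  ultimately show ?thesis by auto
qed

lemma Idl_single: "x \<in> carrier (R::'k::field pm ring) \<Longrightarrow> Idl\<^bsub>(R::'k::field pm ring)\<^esub> {x} = {r * x | r. r \<in> carrier (R::'k::field pm ring)}"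
proof -
  interpret cring "R::'k::field pm ring" by (rule R_cring)
  assume x: "x \<in> carrier (R::'k::field pm ring)"
  show ?thesis using cgenideal_eq_genideal[OF x] unfolding cgenideal_def by simp
qed


lemma depth_le:
  assumes hole: "w0 \<notin> B" "\<forall>b\<in>B. b \<noteq> 0 \<longrightarrow> w0 + b \<in> B"
    and rs: "regular_seq (R::'k::field pm ring) (homog_max_ideal B) xs"
  shows "length xs \<le> 1"
proof (rule ccontr)
  assume "\<not> length xs \<le> 1"
  then obtain x w rest where xs: "xs = x # w # rest" by (cases xs; cases "tl xs") auto
  let ?M = "homog_max_ideal B :: 'k pm set"
  have MM: "set xs \<subseteq> ?M" using rs unfolding regular_seq_def by simp
  have Mprop: "ks p \<subseteq> B \<and> 0 \<notin> ks p" if "p \<in> ?M" for p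
    using that by (simp add: homog_max_ideal_def semigroup_ring_carrier_def in_keys_iff)
  have xM: "ks x \<subseteq> B" "0 \<notin> ks x" and wM: "ks w \<subseteq> B" "0 \<notin> ks w" using Mprop MM xs by auto
  have xc: "x \<in> carrier (R::'k::field pm ring)" using xM by (simp add: semigroup_ring_carrier_def)
  have r0: "\<forall>y\<in>carrier (R::'k::field pm ring). x * y \<in> Idl\<^bsub>(R::'k::field pm ring)\<^esub> {} \<longrightarrow> y \<in> Idl\<^bsub>(R::'k::field pm ring)\<^esub> {}"
    using rs xs unfolding regular_seq_def by (auto dest: spec[of _ 0])
  have "(1::'k pm) \<in> carrier (R::'k::field pm ring)" using c_one by (simp add: semigroup_ring_carrier_def)
  then have x0: "x \<noteq> 0" using r0 Idl_empty by force
  have r1: "\<forall>y\<in>carrier (R::'k::field pm ring). w * y \<in> Idl\<^bsub>(R::'k::field pm ring)\<^esub> {x} \<longrightarrow> y \<in> Idl\<^bsub>(R::'k::field pm ring)\<^esub> {x}"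
    using rs xs unfolding regular_seq_def by (auto dest: spec[of _ 1])
  define z where "z = Poly_Mapping.single w0 (1::'k)"
  have zmul: "ks (z * p) \<subseteq> B" if "ks p \<subseteq> B" "0 \<notin> ks p" for p
  proof
    fix g assume "g \<in> ks (z * p)"
    then obtain a b where "g = a + b" "a \<in> ks z" "b \<in> ks p" using keys_mult[of z p] by blast
    then show "g \<in> B" using that hole(2) unfolding z_def by (auto split: if_splits)
  qed
  have yc: "z * x \<in> carrier (R::'k::field pm ring)" using zmul[OF xM] by (simp add: semigroup_ring_carrier_def)
  have "w * (z * x) = (z * w) * x" by (simp add: mult_ac)
  moreover have "z * w \<in> carrier (R::'k::field pm ring)" using zmul[OF wM] by (simp add: semigroup_ring_carrier_def)
  ultimately have "w * (z * x) \<in> {r * x | r. r \<in> carrier (R::'k::field pm ring)}" by blast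
  then have "w * (z * x) \<in> Idl\<^bsub>(R::'k::field pm ring)\<^esub> {x}" using Idl_single[OF xc] by simp
  then have "z * x \<in> Idl\<^bsub>(R::'k::field pm ring)\<^esub> {x}" using r1 yc by blast
  then obtain r where r: "z * x = r * x" "r \<in> carrier (R::'k::field pm ring)" using Idl_single[OF xc] by auto
  then have "z = r" using x0 by simp
  then have "ks z \<subseteq> B" using r(2) by (simp add: semigroup_ring_carrier_def)
  then show False using hole(1) unfolding z_def by simp
qed

end


lemma Zc_Nvec: "g \<in> Nvec n \<Longrightarrow> g \<in> Zc n \<longleftrightarrow> g \<noteq> 0"
proof
  assume "g \<in> Zc n" then show "g \<noteq> 0" by (auto simp: Zc_def)
next
  assume g: "g \<in> Nvec n" and "g \<noteq> 0"
  then obtain i where i: "lk g i \<noteq> 0" using poly_mapping_eqI[of g 0] by auto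
  then have "i < n" using Nvec_lk[OF g, of i] by (cases "i < n") auto
  then show "g \<in> Zc n" using i by (auto simp: Zc_def)
qed

theorem theorem5p3:
  fixes n d :: nat and U :: "(nat \<Rightarrow>\<^sub>0 nat) set"
  assumes "n \<ge> 2" and "d > 2"
    and "{m \<in> T n d. maxv n m \<ge> d - 1} \<subseteq> U" and "U \<subset> T n d"
  shows "krull_dim (semigroup_ring (gen_semigroup U) :: ((nat \<Rightarrow>\<^sub>0 nat) \<Rightarrow>\<^sub>0 'k::field) ring) = enat n
    \<and> depth (semigroup_ring (gen_semigroup U) :: ((nat \<Rightarrow>\<^sub>0 nat) \<Rightarrow>\<^sub>0 'k::field) ring)
         (homog_max_ideal (gen_semigroup U)) = 1"
proof -
  interpret C: cfg n d U using assms by unfold_locales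
  interpret S: smon "gen_semigroup U" by unfold_locales (auto intro: gen_semigroup.zero gs_add)
  let ?B = "gen_semigroup U"
  let ?R = "semigroup_ring (gen_semigroup U) :: 'k pm ring"
  have BN: "?B \<subseteq> Nvec n" using C.B_Nvec by blast
  have sU: "Poly_Mapping.single i d \<in> ?B" if "i < n" for i
  proof -
    have "Poly_Mapping.single i (d - 1) + Poly_Mapping.single i 1 = Poly_Mapping.single i d"
      using assms(2) by (simp flip: single_add)
    then show ?thesis using C.a_in_U[OF that that] gs_U by metis
  qed
  have Rone: "(1::'k pm) \<in> carrier ?R" using S.c_one by (simp add: semigroup_ring_carrier_def)
  have Qne: "(1::'k pm) \<notin> Qj ?B j" for j by (simp add: Qj_def Zc_def)
  define KS where "KS = {enat (length Ps - 1) | Ps. Ps \<noteq> [] \<and> (\<forall>P \<in> set Ps. primeideal P ?R) \<and> sorted_wrt (\<subset>) Ps}"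
  have up: "x \<le> enat n" if "x \<in> KS" for x
  proof -
    obtain Ps where x: "x = enat (length Ps - 1)" and Ps: "Ps \<noteq> []" "\<forall>P \<in> set Ps. primeideal P ?R"
      "sorted_wrt (\<subset>) Ps" using \<open>x \<in> KS\<close> unfolding KS_def by blast
    have "length Ps \<le> n + 1"
    proof (rule ccontr)
      assume "\<not> length Ps \<le> n + 1"
      then have len: "Suc n < length Ps" by simp
      show False
      proof (rule S.no_long_chain[OF BN, of "\<lambda>i. Ps ! i"])
        fix i assume "i \<le> Suc n"
        then show "primeideal (Ps ! i) ?R" using Ps(2) len by (simp add: nth_mem)
      next
        fix i assume "i \<le> n"
        then show "Ps ! i \<subset> Ps ! Suc i" using sorted_wrt_nth_less[OF Ps(3)] len by simp
      qed
    qed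
    then show ?thesis unfolding x by simp
  qed
  have low: "enat n \<in> KS"
  proof -
    define Ps where "Ps = map (\<lambda>j. Qj ?B j :: 'k pm set) [0..<Suc n]"
    have "Ps \<noteq> []" unfolding Ps_def by simp
    moreover have "\<forall>P \<in> set Ps. primeideal P ?R" unfolding Ps_def using S.Qj_prime by auto
    moreover have "sorted_wrt (\<subset>) Ps"
    proof (subst sorted_wrt_iff_nth_less, intro allI impI)
      fix i j assume ij: "i < j" "j < length Ps"
      have jn: "j \<le> n" using ij unfolding Ps_def by simp
      have "Zc i \<subseteq> Zc j" using ij by (auto simp: Zc_def) (meson less_trans)
      then have "Qj ?B i \<subseteq> (Qj ?B j :: 'k pm set)" by (auto simp: Qj_def)
      moreover
      let ?p = "Poly_Mapping.single (Poly_Mapping.single i d) (1::'k)"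
      have "\<exists>ia<j. 0 < lk (Poly_Mapping.single i d) ia" using ij assms(2) by (intro exI[of _ i]) simp
      then have "?p \<in> Qj ?B j" using sU[of i] ij jn by (simp add: Qj_def Zc_def)
      moreover have "?p \<notin> Qj ?B i" by (simp add: Qj_def Zc_def lookup_single)
      ultimately have "Qj ?B i \<subset> (Qj ?B j :: 'k pm set)" by blast
      moreover have "Ps ! i = Qj ?B i" "Ps ! j = Qj ?B j" using ij unfolding Ps_def by (simp_all del: upt_Suc)
      ultimately show "Ps ! i \<subset> Ps ! j" by simp
    qed
    moreover have "length Ps - 1 = n" unfolding Ps_def by simp
    ultimately show ?thesis unfolding KS_def by force
  qed
  have dim: "krull_dim ?R = enat n"
    unfolding krull_dim_def KS_def[symmetric]
    by (rule antisym) (use up low in \<open>auto intro: Sup_least Sup_upper\<close>)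
  let ?M = "homog_max_ideal ?B :: 'k pm set"
  have MQp: "p \<in> ?M \<longleftrightarrow> p \<in> Qj ?B n" for p :: "'k pm"
  proof -
    have "(lk p 0 = 0) \<longleftrightarrow> (ks p \<subseteq> Zc n)" if "ks p \<subseteq> ?B"
    proof -
      have "ks p \<subseteq> Nvec n" using that BN by blast
      then have "(ks p \<subseteq> Zc n) \<longleftrightarrow> 0 \<notin> ks p" using Zc_Nvec[of _ n] by blast
      then show ?thesis by (simp add: in_keys_iff)
    qed
    then show "p \<in> ?M \<longleftrightarrow> p \<in> Qj ?B n"
      by (auto simp: homog_max_ideal_def semigroup_ring_carrier_def Qj_def)
  qed
  have MQ: "?M = Qj ?B n" using MQp by blast
  define DS where "DS = {enat (length xs) | xs. regular_seq ?R ?M xs}"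
  obtain w0 where w0: "w0 \<notin> ?B" "\<forall>b\<in>?B. b \<noteq> 0 \<longrightarrow> w0 + b \<in> ?B" using C.hole by blast
  have dup: "x \<le> 1" if "x \<in> DS" for x
    using that S.depth_le[OF w0] unfolding DS_def by (auto simp: one_enat_def)
  have dlow: "1 \<in> DS"
  proof -
    define x where "x = Poly_Mapping.single (Poly_Mapping.single (0::nat) d) (1::'k)"
    have n0: "0 < n" using assms(1) by simp
    have "\<exists>i<n. 0 < lk (Poly_Mapping.single (0::nat) d) i" using n0 assms(2) by (intro exI[of _ 0]) simp
    then have xQ: "x \<in> Qj ?B n" using sU[OF n0] by (simp add: x_def Qj_def Zc_def)
    have x0: "x \<noteq> 0"
    proof
      assume "x = 0"
      then have "lk x (Poly_Mapping.single (0::nat) d) = 0" by simp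
      then show False by (simp add: x_def)
    qed
    have xc: "x \<in> carrier ?R" using xQ by (simp add: Qj_def semigroup_ring_carrier_def)
    interpret cring ?R by (rule S.R_cring)
    have "Idl\<^bsub>?R\<^esub> {x} \<subseteq> Qj ?B n" by (rule genideal_minimal[OF S.Qj_ideal]) (use xQ in simp)
    then have "Idl\<^bsub>?R\<^esub> {x} \<noteq> carrier ?R" using Rone Qne by blast
    moreover have "\<forall>y\<in>carrier ?R. x * y \<in> Idl\<^bsub>?R\<^esub> {} \<longrightarrow> y \<in> Idl\<^bsub>?R\<^esub> {}"
    proof -
      have e: "Idl\<^bsub>?R\<^esub> {} = {0}" by (rule S.Idl_empty)
      show ?thesis unfolding e using x0 by simp
    qed
    ultimately have "regular_seq ?R ?M [x]" using xQ MQ unfolding regular_seq_def by (simp add: less_one)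
    then show ?thesis unfolding DS_def by (metis (mono_tags, lifting) One_nat_def length_Cons list.size(3) mem_Collect_eq one_enat_def)
  qed
  have dep: "depth ?R ?M = 1"
    unfolding depth_def DS_def[symmetric]
    by (rule antisym) (use dup dlow in \<open>auto intro: Sup_least Sup_upper\<close>)
  show ?thesis using dim dep by simp
qed

end
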